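(* Let $\sigma$ and $\sigma''$ be density matrices on $\mathcal{H}$ with the same support. Then $d(\sigma'')=d(\sigma)$.
   Context: $\mathcal{H}=\mathcal{H}_1\otimes\cdots\otimes\mathcal{H}_m$ is finite-dimensional. A positive semidefinite operator is separable if it is a nonnegative combination of tensor products of positive semidefinite operators on the $\mathcal{H}_k$. The support of a density matrix is the span of its eigenvectors with nonzero eigenvalues. For a density matrix $\sigma$, $d(\sigma):=\min \mathrm{Tr}(\Pi)/\mathrm{Tr}(\sigma\Pi)$ over separable positive semidefinite operators $\Pi$ with $\mathrm{Tr}(\sigma\Pi)>0$ and $0\le \Pi/\mathrm{Tr}(\sigma\Pi)\le I$ (equivalently, $\min\mathrm{Tr}\,\Pi'$ over separable $\Pi'$ with $0\le\Pi'\le I$ and $\mathrm{Tr}(\sigma\Pi')=1$). *)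

theory Defs
  imports "HOL-Analysis.Analysis"
begin

text \<open>Operators on a finite-dimensional space with orthonormal basis indexed by a
finite set I are represented by their matrices, i.e. functions I x I to complex;
vectors are functions I to complex vanishing outside I.\<close>

type_synonym 'i op = "'i \<Rightarrow> 'i \<Rightarrow> complex"

definition tr :: "'i set \<Rightarrow> 'i op \<Rightarrow> complex" where
  "tr I A = (\<Sum>i\<in>I. A i i)"

definition opmul :: "'i set \<Rightarrow> 'i op \<Rightarrow> 'i op \<Rightarrow> 'i op" where
  "opmul I A B = (\<lambda>i j. \<Sum>k\<in>I. A i k * B k j)"

definition idop :: "'i op" where
  "idop = (\<lambda>i j. if i = j then 1 else 0)"

definition hermitian_on :: "'i set \<Rightarrow> 'i op \<Rightarrow> bool" where
  "hermitian_on I A \<longleftrightarrow> (\<forall>i\<in>I. \<forall>j\<in>I. A i j = cnj (A j i))"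

definition psd_on :: "'i set \<Rightarrow> 'i op \<Rightarrow> bool" where
  "psd_on I A \<longleftrightarrow> hermitian_on I A \<and>
     (\<forall>v :: 'i \<Rightarrow> complex. Im (\<Sum>i\<in>I. \<Sum>j\<in>I. cnj (v i) * A i j * v j) = 0 \<and>
                              Re (\<Sum>i\<in>I. \<Sum>j\<in>I. cnj (v i) * A i j * v j) \<ge> 0)"

definition density_on :: "'i set \<Rightarrow> 'i op \<Rightarrow> bool" where
  "density_on I \<rho> \<longleftrightarrow> psd_on I \<rho> \<and> tr I \<rho> = 1"

definition vecs_on :: "'i set \<Rightarrow> ('i \<Rightarrow> complex) set" where
  "vecs_on I = {v. \<forall>i. i \<notin> I \<longrightarrow> v i = 0}"

definition apply_op :: "'i set \<Rightarrow> 'i op \<Rightarrow> ('i \<Rightarrow> complex) \<Rightarrow> ('i \<Rightarrow> complex)" where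
  "apply_op I A v = (\<lambda>i. if i \<in> I then (\<Sum>j\<in>I. A i j * v j) else 0)"

definition nz_eigvecs :: "'i set \<Rightarrow> 'i op \<Rightarrow> ('i \<Rightarrow> complex) set" where
  "nz_eigvecs I A = {v \<in> vecs_on I. v \<noteq> (\<lambda>_. 0) \<and>
                       (\<exists>e. e \<noteq> 0 \<and> apply_op I A v = (\<lambda>i. e * v i))}"

definition cspan :: "('i \<Rightarrow> complex) set \<Rightarrow> ('i \<Rightarrow> complex) set" where
  "cspan E = {w. \<exists>S c. finite S \<and> S \<subseteq> E \<and> w = (\<lambda>i. \<Sum>u\<in>S. c u * u i)}"

definition support :: "'i set \<Rightarrow> 'i op \<Rightarrow> ('i \<Rightarrow> complex) set" where
  "support I \<rho> = cspan (nz_eigvecs I \<rho>)"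

text \<open>Multipartite space H_1 \<otimes> ... \<otimes> H_m with dim H_k = dims!k: basis indexed by
tuples (lists) xs with xs!k < dims!k.\<close>
definition tidx :: "nat list \<Rightarrow> nat list set" where
  "tidx dims = {xs. length xs = length dims \<and> (\<forall>k<length dims. xs ! k < dims ! k)}"

text \<open>Separable: nonnegative (finite) combination of tensor products of PSD operators
on the factors.  The tensor product of A_0, ..., A_{m-1} has matrix entries
prod_k A_k (i!k) (j!k).\<close>
definition separable :: "nat list \<Rightarrow> nat list op \<Rightarrow> bool" where
  "separable dims P \<longleftrightarrow>
     (\<exists>(n::nat) (c :: nat \<Rightarrow> real) (A :: nat \<Rightarrow> nat \<Rightarrow> nat op).
        (\<forall>l<n. c l \<ge> 0 \<and> (\<forall>k<length dims. psd_on {..<dims ! k} (A l k))) \<and>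
        (\<forall>i\<in>tidx dims. \<forall>j\<in>tidx dims.
            P i j = (\<Sum>l<n. of_real (c l) * (\<Prod>k<length dims. A l k (i ! k) (j ! k)))))"

text \<open>d(sigma) = min Tr(P)/Tr(sigma P) over separable PSD P with Tr(sigma P) > 0 and
0 \<le> P/Tr(sigma P) \<le> I.  (Tr(sigma P) is real for PSD sigma, P.)\<close>
definition dval :: "nat list \<Rightarrow> nat list op \<Rightarrow> real" where
  "dval dims \<sigma> = Inf {Re (tr (tidx dims) P) / Re (tr (tidx dims) (opmul (tidx dims) \<sigma> P)) | P.
       separable dims P \<and> psd_on (tidx dims) P \<and>
       Re (tr (tidx dims) (opmul (tidx dims) \<sigma> P)) > 0 \<and>
       (let t = Re (tr (tidx dims) (opmul (tidx dims) \<sigma> P)) in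
          psd_on (tidx dims) (\<lambda>i j. P i j / of_real t) \<and>
          psd_on (tidx dims) (\<lambda>i j. idop i j - P i j / of_real t))}"

end

theory Submission
  imports Defs "Jordan_Normal_Form.Jordan_Normal_Form_Existence"
begin


lemma jnf_nilpotent:
  fixes M :: "complex mat"
  assumes M: "M \<in> carrier_mat n n"
    and noev: "\<And>u e. eigenvector M u e \<Longrightarrow> e = 0"
  shows "M ^\<^sub>m n = 0\<^sub>m n n"
proof -
  obtain as where cp: "char_poly M = (\<Prod>a\<leftarrow>as. [:- a, 1:])"
    using char_poly_factorized[OF M] by blast
  obtain n_as where jnf: "jordan_nf M n_as" using jordan_nf_exists[OF M cp] by blast
  obtain P Q where P: "P \<in> carrier_mat n n" and Q: "Q \<in> carrier_mat n n"
    and cp2: "char_poly M = (\<Prod>(na, a)\<leftarrow>n_as. [:- a, 1:] ^ na)"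
    and pw: "\<And>k. M ^\<^sub>m k = P * (jordan_matrix n_as)^\<^sub>m k * Q"
    using jordan_nf_powE[OF M jnf] by metis
  have nz: "0 \<notin> fst ` set n_as" and sim: "similar_mat M (jordan_matrix n_as)"
    using jnf unfolding jordan_nf_def by auto
  have Jc: "jordan_matrix n_as \<in> carrier_mat n n"
    using sim M unfolding similar_mat_def similar_mat_wit_def Let_def by auto
  hence sumn: "sum_list (map fst n_as) = n" by (metis carrier_matD(1) jordan_matrix_dim(1))
  have a0: "a = 0" and mle: "m \<le> n" if mem: "(m, a) \<in> set n_as" for m a
  proof -
    have "m \<noteq> 0" using nz mem by force
    have "[:- a, 1:] ^ m \<in> set (map (\<lambda>(na, a). [:- a, 1:] ^ na) n_as)"
      using mem by force
    hence d1: "[:- a, 1:] ^ m dvd char_poly M"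
      unfolding cp2 by (rule prod_list_dvd)
    have "[:- a, 1:] dvd [:- a, 1:] ^ m" using \<open>m \<noteq> 0\<close> by (intro dvd_power) simp
    hence "[:- a, 1:] dvd char_poly M" using d1 by (rule dvd_trans)
    hence "poly (char_poly M) a = 0" by (simp add: poly_eq_0_iff_dvd)
    hence "eigenvalue M a" using eigenvalue_root_char_poly[OF M] by simp
    then show "a = 0" using noev unfolding eigenvalue_def by blast
    have "m \<in> set (map fst n_as)" using mem by force
    from member_le_sum_list[OF this] show "m \<le> n" using sumn by simp
  qed
  have blk: "elements_mat ((\<lambda>(m, a). jordan_block m a ^\<^sub>m n) x) \<subseteq> {0}"
    if "x \<in> set n_as" for x
  proof -
    obtain m a where x: "x = (m, a)" by force
    have "a = 0" "m \<le> n" using a0 mle that x by auto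
    thus ?thesis unfolding x
      by (auto simp: elements_mat_def jordan_block_zero_pow)
  qed
  have J0: "(jordan_matrix n_as) ^\<^sub>m n = 0\<^sub>m n n"
  proof (rule eq_matI)
    fix i j assume ij: "i < dim_row (0\<^sub>m n n :: complex mat)" "j < dim_col (0\<^sub>m n n :: complex mat)"
    have "(jordan_matrix n_as ^\<^sub>m n) $$ (i, j) \<in> elements_mat (jordan_matrix n_as ^\<^sub>m n)"
      using ij Jc by (intro elements_matI[of _ n n]) auto
    also have "\<dots> \<subseteq> {0}"
    proof -
      let ?f = "\<lambda>(m, a). jordan_block m a ^\<^sub>m n"
      have "\<Union> (set (map elements_mat (map ?f n_as))) \<subseteq> {0}" using blk by auto
      thus ?thesis unfolding jordan_matrix_pow using elements_diag_block_mat[of "map ?f n_as"] by blast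
    qed
    finally show "(jordan_matrix n_as ^\<^sub>m n) $$ (i, j) = 0\<^sub>m n n $$ (i, j)" using ij by simp
  qed (use Jc sumn in auto)
  show ?thesis unfolding pw J0 using P Q by simp
qed

definition ip :: "'i set \<Rightarrow> ('i \<Rightarrow> complex) \<Rightarrow> ('i \<Rightarrow> complex) \<Rightarrow> complex" where
  "ip I u v = (\<Sum>i\<in>I. cnj (u i) * v i)"

lemma herm_entry: "hermitian_on I A \<Longrightarrow> i \<in> I \<Longrightarrow> j \<in> I \<Longrightarrow> cnj (A i j) = A j i"
  unfolding hermitian_on_def by (metis complex_cnj_cnj)

lemma herm_adj:
  assumes "hermitian_on I A"
  shows "ip I (apply_op I A x) y = ip I x (apply_op I A y)"
proof -
  have "ip I (apply_op I A x) y = (\<Sum>i\<in>I. \<Sum>j\<in>I. cnj (A i j) * cnj (x j) * y i)"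
    unfolding ip_def apply_op_def
    by (intro sum.cong refl) (simp add: cnj_sum sum_distrib_right)
  also have "\<dots> = (\<Sum>i\<in>I. \<Sum>j\<in>I. A j i * cnj (x j) * y i)"
    using herm_entry[OF assms] by (intro sum.cong refl) simp
  also have "\<dots> = (\<Sum>j\<in>I. \<Sum>i\<in>I. A j i * cnj (x j) * y i)"
    by (rule sum.swap)
  also have "\<dots> = ip I x (apply_op I A y)"
    unfolding ip_def apply_op_def
    by (intro sum.cong refl) (simp add: sum_distrib_left mult.commute mult.left_commute)
  finally show ?thesis .
qed

lemma ip_self_real: "ip I x x = of_real (\<Sum>i\<in>I. (cmod (x i))\<^sup>2)"
proof -
  have "cnj z * z = of_real ((cmod z)\<^sup>2)" for z
    using complex_norm_square[of z] by (simp add: mult.commute)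
  thus ?thesis unfolding ip_def of_real_sum by simp
qed

lemma ip_self_zero:
  assumes "finite I" "ip I x x = 0" "i \<in> I"
  shows "x i = 0"
proof -
  have "(\<Sum>i\<in>I. (cmod (x i))\<^sup>2) = 0" using assms(2) ip_self_real[of I x] of_real_eq_0_iff by metis
  hence "(cmod (x i))\<^sup>2 = 0" using assms(1,3) sum_nonneg_eq_0_iff[of I "\<lambda>i. (cmod (x i))\<^sup>2"] by auto
  thus ?thesis by simp
qed

lemma apply_op_outside: "i \<notin> I \<Longrightarrow> apply_op I A x i = 0"
  unfolding apply_op_def by simp

lemma apply_op_vecs: "apply_op I A x \<in> vecs_on I"
  unfolding vecs_on_def apply_op_def by simp

lemma herm_sq:
  assumes "finite I" "hermitian_on I A" "apply_op I A (apply_op I A y) = (\<lambda>_. 0)"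
  shows "apply_op I A y = (\<lambda>_. 0)"
proof -
  have "ip I (apply_op I A y) (apply_op I A y) = ip I y (apply_op I A (apply_op I A y))"
    by (rule herm_adj[OF assms(2)])
  also have "\<dots> = 0" unfolding assms(3) ip_def by simp
  finally have z: "ip I (apply_op I A y) (apply_op I A y) = 0" .
  show ?thesis
  proof
    fix i show "apply_op I A y i = 0"
      using ip_self_zero[OF assms(1) z] apply_op_outside[of i I A y] by (cases "i \<in> I") auto
  qed
qed

lemma pow_kill:
  assumes "finite I" "hermitian_on I A"
  shows "(apply_op I A ^^ Suc k) x = (\<lambda>_. 0) \<Longrightarrow> apply_op I A x = (\<lambda>_. 0)"
proof (induct k)
  case 0 thus ?case by simp
next
  case (Suc k)
  have "apply_op I A (apply_op I A ((apply_op I A ^^ k) x)) = (\<lambda>_. 0)"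
    using Suc.prems by (simp del: funpow.simps add: funpow_Suc_right[symmetric] funpow.simps(2))
  hence "apply_op I A ((apply_op I A ^^ k) x) = (\<lambda>_. 0)" by (rule herm_sq[OF assms])
  thus ?case using Suc.hyps by simp
qed


lemma transport_mv:
  assumes bij: "bij_betw h {0..<n} I"
  shows "Matrix.mat n n (\<lambda>(a,b). A (h a) (h b)) *\<^sub>v Matrix.vec n (\<lambda>a. x (h a))
       = Matrix.vec n (\<lambda>a. apply_op I A x (h a))"
proof (rule eq_vecI)
  fix a assume a: "a < dim_vec (Matrix.vec n (\<lambda>a. apply_op I A x (h a)))"
  hence an: "a < n" by simp
  have ha: "h a \<in> I" using bij an unfolding bij_betw_def by auto
  have "(Matrix.mat n n (\<lambda>(a,b). A (h a) (h b)) *\<^sub>v Matrix.vec n (\<lambda>a. x (h a))) $ a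
      = (\<Sum>b\<in>{0..<n}. A (h a) (h b) * x (h b))"
    using an by (simp add: scalar_prod_def)
  also have "\<dots> = (\<Sum>j\<in>I. A (h a) j * x j)"
    by (rule sum.reindex_bij_betw[OF bij])
  also have "\<dots> = Matrix.vec n (\<lambda>a. apply_op I A x (h a)) $ a"
    using an ha by (simp add: apply_op_def)
  finally show "(Matrix.mat n n (\<lambda>(a,b). A (h a) (h b)) *\<^sub>v Matrix.vec n (\<lambda>a. x (h a))) $ a
      = Matrix.vec n (\<lambda>a. apply_op I A x (h a)) $ a" .
qed simp

lemma transport_pow:
  assumes bij: "bij_betw h {0..<n} I"
  shows "(Matrix.mat n n (\<lambda>(a,b). A (h a) (h b)) ^\<^sub>m k) *\<^sub>v Matrix.vec n (\<lambda>a. x (h a))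
       = Matrix.vec n (\<lambda>a. (apply_op I A ^^ k) x (h a))"
proof (induct k arbitrary: x)
  case 0 thus ?case by (simp add: one_mult_mat_vec)
next
  case (Suc k)
  let ?M = "Matrix.mat n n (\<lambda>(a,b). A (h a) (h b))"
  have c: "?M \<in> carrier_mat n n" by simp
  have "(?M ^\<^sub>m Suc k) *\<^sub>v Matrix.vec n (\<lambda>a. x (h a))
      = (?M ^\<^sub>m k) *\<^sub>v (?M *\<^sub>v Matrix.vec n (\<lambda>a. x (h a)))"
    by (simp, rule assoc_mult_mat_vec[of _ n n _ n], auto intro: pow_carrier_mat[OF c])
  also have "\<dots> = (?M ^\<^sub>m k) *\<^sub>v Matrix.vec n (\<lambda>a. apply_op I A x (h a))"
    by (simp only: transport_mv[OF bij])
  also have "\<dots> = Matrix.vec n (\<lambda>a. (apply_op I A ^^ k) (apply_op I A x) (h a))"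
    by (rule Suc)
  finally show ?case by (simp only: funpow_Suc_right o_def)
qed

lemma transport_eig:
  assumes bij: "bij_betw h {0..<n} I"
    and ev: "eigenvector (Matrix.mat n n (\<lambda>(a,b). A (h a) (h b))) u e"
  shows "\<exists>v. v \<in> vecs_on I \<and> v \<noteq> (\<lambda>_. 0) \<and> apply_op I A v = (\<lambda>i. e * v i)"
proof -
  let ?M = "Matrix.mat n n (\<lambda>(a,b). A (h a) (h b))"
  define g where "g = inv_into {0..<n} h"
  define v where "v = (\<lambda>i. if i \<in> I then u $ g i else 0)"
  have u: "u \<in> carrier_vec n" "u \<noteq> 0\<^sub>v n" "?M *\<^sub>v u = e \<cdot>\<^sub>v u"
    using ev unfolding eigenvector_def by auto
  have hI: "a < n \<Longrightarrow> h a \<in> I" for a using bij unfolding bij_betw_def by auto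
  have gh: "a < n \<Longrightarrow> g (h a) = a" for a
    using bij unfolding g_def bij_betw_def by (simp add: inv_into_f_f)
  have hg: "i \<in> I \<Longrightarrow> h (g i) = i" "i \<in> I \<Longrightarrow> g i < n" for i
    using bij unfolding g_def bij_betw_def
    by (auto simp: f_inv_into_f inv_into_into)
  have uv: "Matrix.vec n (\<lambda>a. v (h a)) = u"
    using u(1) hI gh unfolding v_def by (intro eq_vecI) auto
  have eq: "Matrix.vec n (\<lambda>a. apply_op I A v (h a)) = e \<cdot>\<^sub>v u"
    using transport_mv[OF bij, of A v] uv u(3) by simp
  have "apply_op I A v = (\<lambda>i. e * v i)"
  proof
    fix i show "apply_op I A v i = e * v i"
    proof (cases "i \<in> I")
      case True
      have "apply_op I A v (h (g i)) = (e \<cdot>\<^sub>v u) $ g i"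
        using arg_cong[OF eq, of "\<lambda>w. w $ g i"] hg[OF True] by simp
      thus ?thesis using True hg[OF True] u(1) unfolding v_def by simp
    next
      case False thus ?thesis by (simp add: apply_op_def v_def)
    qed
  qed
  moreover have "v \<noteq> (\<lambda>_. 0)"
  proof
    assume "v = (\<lambda>_. 0)"
    hence "u = 0\<^sub>v n" using uv by (intro eq_vecI) (auto simp: u(1)[THEN carrier_vecD] dest: sym)
    thus False using u(2) by simp
  qed
  moreover have "v \<in> vecs_on I" unfolding vecs_on_def v_def by simp
  ultimately show ?thesis by blast
qed


lemma herm_nz_eig:
  assumes fin: "finite I" and herm: "hermitian_on I A"
    and nz: "apply_op I A x \<noteq> (\<lambda>_. 0)"
  shows "\<exists>v e. v \<in> vecs_on I \<and> v \<noteq> (\<lambda>_. 0) \<and> e \<noteq> 0 \<and> apply_op I A v = (\<lambda>i. e * v i)"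
proof (rule ccontr)
  assume no: "\<not> ?thesis"
  define n where "n = card I"
  obtain h where bij: "bij_betw h {0..<n} I" using ex_bij_betw_nat_finite[OF fin] n_def by blast
  let ?M = "Matrix.mat n n (\<lambda>(a,b). A (h a) (h b))"
  have "?M ^\<^sub>m n = 0\<^sub>m n n"
  proof (rule jnf_nilpotent)
    fix u e assume "eigenvector ?M u e"
    from transport_eig[OF bij this] no show "e = 0" by blast
  qed simp
  have z: "Matrix.vec n (\<lambda>a. (apply_op I A ^^ n) x (h a)) = 0\<^sub>v n"
  proof -
    have "0\<^sub>m n n *\<^sub>v Matrix.vec n (\<lambda>a. x (h a)) = (0\<^sub>v n :: complex Matrix.vec)"
      by (intro eq_vecI) (auto simp: scalar_prod_def)
    thus ?thesis using transport_pow[OF bij, of A n x] \<open>?M ^\<^sub>m n = 0\<^sub>m n n\<close> by simp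
  qed
  show False
  proof (cases n)
    case 0
    hence "I = {}" using fin n_def by simp
    hence "apply_op I A x = (\<lambda>_. 0)" by (simp add: apply_op_def)
    with nz show False by simp
  next
    case (Suc k)
    have "(apply_op I A ^^ Suc k) x = (\<lambda>_. 0)"
    proof
      fix i show "(apply_op I A ^^ Suc k) x i = 0"
      proof (cases "i \<in> I")
        case True
        then obtain a where a: "a < n" "h a = i" using bij unfolding bij_betw_def by auto
        from arg_cong[OF z, of "\<lambda>w. w $ a"] a show ?thesis using Suc by simp
      next
        case False thus ?thesis by (simp add: apply_op_def)
      qed
    qed
    from pow_kill[OF fin herm this] nz show False by simp
  qed
qed


lemma ip_cnj: "ip I y x = cnj (ip I x y)"
  unfolding ip_def by (simp add: mult.commute)

lemma ip_lin_left: "ip I (\<lambda>j. a * x j + b * y j) z = cnj a * ip I x z + cnj b * ip I y z"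
  unfolding ip_def by (simp add: algebra_simps sum.distrib sum_distrib_left)

lemma ip_lin_right: "ip I z (\<lambda>j. a * x j + b * y j) = a * ip I z x + b * ip I z y"
  unfolding ip_def by (simp add: algebra_simps sum.distrib sum_distrib_left)

lemma ip_diff_left: "ip I (\<lambda>j. x j - y j) z = ip I x z - ip I y z"
  unfolding ip_def by (simp add: algebra_simps sum_subtractf)

lemma ip_diff_right: "ip I z (\<lambda>j. x j - y j) = ip I z x - ip I z y"
  unfolding ip_def by (simp add: algebra_simps sum_subtractf)

lemma ip_sum_left: "ip I (\<lambda>j. \<Sum>k\<in>K. c k * u k j) z = (\<Sum>k\<in>K. cnj (c k) * ip I (u k) z)"
  unfolding ip_def by (simp add: cnj_sum sum_distrib_left sum_distrib_right mult.assoc sum.swap[of _ I])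

lemma ip_sum_right: "ip I z (\<lambda>j. \<Sum>k\<in>K. c k * u k j) = (\<Sum>k\<in>K. c k * ip I z (u k))"
  unfolding ip_def by (simp add: sum_distrib_left mult.left_commute sum.swap[of _ I])

lemma apply_op_sum: "apply_op I A (\<lambda>j. \<Sum>k\<in>K. c k * u k j) = (\<lambda>i. \<Sum>k\<in>K. c k * apply_op I A (u k) i)"
  unfolding apply_op_def by (auto simp: sum_distrib_left mult.left_commute sum.swap[of _ I])

lemma apply_op_lin: "apply_op I A (\<lambda>j. a * x j + b * y j) = (\<lambda>i. a * apply_op I A x i + b * apply_op I A y i)"
  unfolding apply_op_def by (auto simp: sum.distrib sum_distrib_left algebra_simps)

lemma bessel:
  fixes m :: nat
  assumes ortho: "\<And>k l. k < m \<Longrightarrow> l < m \<Longrightarrow> ip I (u k) (u l) = (if k = l then 1 else 0)"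
  shows "(\<Sum>k<m. (cmod (ip I (u k) x))\<^sup>2) \<le> Re (ip I x x)"
proof -
  define c where "c k = ip I (u k) x" for k
  define s where "s = (\<lambda>j. \<Sum>k<m. c k * u k j)"
  have xs: "ip I x s = (\<Sum>k<m. c k * cnj (c k))"
    unfolding s_def ip_sum_right c_def using ip_cnj by metis
  have sx: "ip I s x = (\<Sum>k<m. cnj (c k) * c k)"
    unfolding s_def ip_sum_left c_def ..
  have ss: "ip I s s = (\<Sum>k<m. cnj (c k) * c k)"
  proof -
    have "ip I s s = (\<Sum>k<m. cnj (c k) * ip I (u k) s)" unfolding s_def ip_sum_left ..
    also have "\<dots> = (\<Sum>k<m. cnj (c k) * c k)"
    proof (rule sum.cong[OF refl])
      fix k assume k: "k \<in> {..<m}"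
      have "ip I (u k) s = (\<Sum>l<m. c l * ip I (u k) (u l))" unfolding s_def ip_sum_right ..
      also have "\<dots> = (\<Sum>l<m. if l = k then c l else 0)"
        using k ortho by (intro sum.cong refl) auto
      also have "\<dots> = c k" by (rule trans[OF sum.delta[OF finite_lessThan]]) (use k in simp)
      finally show "cnj (c k) * ip I (u k) s = cnj (c k) * c k" by simp
    qed
    finally show ?thesis .
  qed
  have "ip I (\<lambda>j. x j - s j) (\<lambda>j. x j - s j) = ip I x x - (\<Sum>k<m. cnj (c k) * c k)"
    unfolding ip_diff_left ip_diff_right xs sx ss by (simp add: mult.commute)
  moreover have "cnj z * z = of_real ((cmod z)\<^sup>2)" for z
    using complex_norm_square[of z] by (simp add: mult.commute)
  ultimately have "ip I (\<lambda>j. x j - s j) (\<lambda>j. x j - s j) = ip I x x - of_real (\<Sum>k<m. (cmod (c k))\<^sup>2)"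
    by (simp add: of_real_sum)
  moreover have "0 \<le> Re (ip I (\<lambda>j. x j - s j) (\<lambda>j. x j - s j))"
    unfolding ip_self_real by (simp add: sum_nonneg)
  ultimately show ?thesis unfolding c_def by simp
qed

lemma sum_delta_mult:
  fixes f :: "'i \<Rightarrow> complex"
  assumes "finite I" "i \<in> I"
  shows "(\<Sum>j\<in>I. f j * (if j = i then 1 else 0)) = f i"
proof -
  have "(\<Sum>j\<in>I. f j * (if j = i then 1 else 0)) = (\<Sum>j\<in>I. if j = i then f j else 0)"
    by (intro sum.cong refl) auto
  also have "\<dots> = f i" by (rule trans[OF sum.delta[OF assms(1)]]) (use assms in simp)
  finally show ?thesis .
qed

lemma ortho_card:
  fixes u :: "nat \<Rightarrow> 'i \<Rightarrow> complex"
  assumes fin: "finite I" and vec: "\<And>k. k < m \<Longrightarrow> u k \<in> vecs_on I"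
    and ortho: "\<And>k l. k < m \<Longrightarrow> l < m \<Longrightarrow> ip I (u k) (u l) = (if k = l then 1 else 0)"
  shows "m \<le> card I"
proof -
  define e where "e i = (\<lambda>j::'i. if j = i then (1::complex) else 0)" for i :: 'i
  have "(\<Sum>i\<in>I. \<Sum>k<m. (cmod (ip I (u k) (e i)))\<^sup>2) \<le> (\<Sum>i\<in>I. Re (ip I (e i) (e i)))"
    by (intro sum_mono bessel ortho)
  also have "\<dots> = (\<Sum>i\<in>I. 1)"
  proof (intro sum.cong refl)
    fix i assume i: "i \<in> I"
    have "ip I (e i) (e i) = (\<Sum>j\<in>I. if j = i then 1 else 0)"
      unfolding ip_def e_def by (intro sum.cong refl) auto
    also have "\<dots> = 1" using i fin by (subst sum.delta) auto
    finally show "Re (ip I (e i) (e i)) = 1" by simp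
  qed
  also have "\<dots> = card I" by simp
  also have "(\<Sum>i\<in>I. \<Sum>k<m. (cmod (ip I (u k) (e i)))\<^sup>2) = (\<Sum>k<m. \<Sum>i\<in>I. (cmod (u k i))\<^sup>2)"
    using fin by (subst sum.swap) (intro sum.cong refl, simp add: ip_def e_def sum_delta_mult)
  also have "\<dots> = (\<Sum>k<m. Re (ip I (u k) (u k)))"
    by (intro sum.cong refl) (simp add: ip_self_real)
  also have "\<dots> = m" using ortho by simp
  finally show ?thesis by simp
qed

lemma quad_ip: "(\<Sum>i\<in>I. \<Sum>j\<in>I. cnj (v i) * A i j * v j) = ip I v (apply_op I A v)"
  unfolding ip_def apply_op_def by (auto simp: sum_distrib_left mult.assoc intro: sum.cong)

lemma psd_quad: "psd_on I A \<Longrightarrow> Im (ip I v (apply_op I A v)) = 0 \<and> Re (ip I v (apply_op I A v)) \<ge> 0"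
  unfolding psd_on_def quad_ip by blast

lemma real_aux:
  fixes a b :: real
  assumes "a \<ge> 0" "b \<ge> 0" "\<And>t. 0 \<le> 2 * t * a + t\<^sup>2 * b"
  shows "a = 0"
proof -
  define t where "t = - a / (b + 1)"
  have "0 \<le> 2 * t * a + t\<^sup>2 * b" by (rule assms(3))
  hence "0 \<le> (2 * t * a + t\<^sup>2 * b) * (b + 1)\<^sup>2" using assms by simp
  also have "(2 * t * a + t\<^sup>2 * b) * (b + 1)\<^sup>2 = 2 * a * (t * (b + 1)) * (b + 1) + (t * (b + 1))\<^sup>2 * b"
    by (simp add: algebra_simps power2_eq_square)
  also have "t * (b + 1) = - a" unfolding t_def using assms(2) by simp
  also have "2 * a * (- a) * (b + 1) + (- a)\<^sup>2 * b = - a\<^sup>2 * (b + 2)"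
    by (simp add: algebra_simps power2_eq_square)
  finally have "a\<^sup>2 * (b + 2) \<le> 0" by simp
  hence "a\<^sup>2 \<le> 0" using assms(2) by (simp add: mult_le_0_iff)
  thus ?thesis by simp
qed

lemma psd_kill:
  assumes fin: "finite I" and psd: "psd_on I R" and z: "ip I u (apply_op I R u) = 0"
  shows "apply_op I R u = (\<lambda>_. 0)"
proof -
  have herm: "hermitian_on I R" using psd unfolding psd_on_def by simp
  define w where "w = apply_op I R u"
  define a where "a = Re (ip I w w)"
  define b where "b = Re (ip I w (apply_op I R w))"
  have wwr: "ip I w w = of_real a" unfolding a_def ip_self_real by simp
  have a0: "a \<ge> 0" unfolding a_def ip_self_real by (simp add: sum_nonneg)
  have b0: "b \<ge> 0" using psd_quad[OF psd, of w] b_def by simp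
  have bi: "Im (ip I w (apply_op I R w)) = 0" using psd_quad[OF psd, of w] by simp
  have "0 \<le> 2 * t * a + t\<^sup>2 * b" for t
  proof -
    define v where "v = (\<lambda>j. 1 * u j + of_real t * w j)"
    have Rv: "apply_op I R v = (\<lambda>i. 1 * w i + of_real t * apply_op I R w i)"
      unfolding v_def apply_op_lin w_def ..
    have uw: "ip I u (apply_op I R w) = of_real a"
      using herm_adj[OF herm, of u w] wwr unfolding w_def by simp
    have e1: "ip I v (apply_op I R v) = cnj 1 * ip I u (apply_op I R v) + cnj (of_real t) * ip I w (apply_op I R v)"
      unfolding v_def by (rule ip_lin_left)
    have e2: "ip I u (apply_op I R v) = 1 * ip I u w + of_real t * ip I u (apply_op I R w)"
      by (simp only: Rv ip_lin_right)
    have e3: "ip I w (apply_op I R v) = 1 * ip I w w + of_real t * ip I w (apply_op I R w)"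
      by (simp only: Rv ip_lin_right)
    have "ip I v (apply_op I R v) = ip I u w + of_real t * ip I u (apply_op I R w)
        + of_real t * (ip I w w + of_real t * ip I w (apply_op I R w))"
      unfolding e1 e2 e3 by simp
    also have "\<dots> = of_real (2 * t * a) + of_real (t\<^sup>2) * ip I w (apply_op I R w)"
      using z uw wwr unfolding w_def by (simp add: algebra_simps power2_eq_square)
    finally have "Re (ip I v (apply_op I R v)) = 2 * t * a + t\<^sup>2 * b"
      unfolding b_def by simp
    thus ?thesis using psd_quad[OF psd, of v] by simp
  qed
  hence "a = 0" using real_aux a0 b0 by blast
  hence "ip I w w = 0" using wwr by simp
  show ?thesis
  proof
    fix i show "apply_op I R u i = 0"
      using ip_self_zero[OF fin \<open>ip I w w = 0\<close>] apply_op_outside[of i I R u] unfolding w_def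
      by (cases "i \<in> I") auto
  qed
qed


definition orthon :: "'i set \<Rightarrow> nat \<Rightarrow> (nat \<Rightarrow> 'i \<Rightarrow> complex) \<Rightarrow> bool" where
  "orthon I m u \<longleftrightarrow> (\<forall>k<m. u k \<in> vecs_on I) \<and>
     (\<forall>k<m. \<forall>l<m. ip I (u k) (u l) = (if k = l then 1 else 0))"

definition spec :: "'i set \<Rightarrow> 'i op \<Rightarrow> nat \<Rightarrow> (nat \<Rightarrow> real) \<Rightarrow> (nat \<Rightarrow> 'i \<Rightarrow> complex) \<Rightarrow> bool" where
  "spec I A m lam u \<longleftrightarrow> orthon I m u \<and>
     (\<forall>k<m. lam k \<noteq> 0 \<and> apply_op I A (u k) = (\<lambda>i. of_real (lam k) * u k i)) \<and>
     (\<forall>i\<in>I. \<forall>j\<in>I. A i j = (\<Sum>k<m. of_real (lam k) * u k i * cnj (u k j)))"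

lemma zero_op_spec:
  assumes fin: "finite I" and z: "\<And>x. apply_op I A x = (\<lambda>_. 0)"
  shows "spec I A 0 lam u"
proof -
  have "A i j = 0" if "i \<in> I" "j \<in> I" for i j
  proof -
    have "apply_op I A (\<lambda>l. if l = j then 1 else 0) i = A i j"
      using that fin by (simp add: apply_op_def sum_delta_mult)
    thus ?thesis using z by simp
  qed
  thus ?thesis unfolding spec_def orthon_def by simp
qed

lemma eig_real:
  assumes fin: "finite I" and herm: "hermitian_on I A" and v: "v \<in> vecs_on I" "v \<noteq> (\<lambda>_. 0)"
    and ev: "apply_op I A v = (\<lambda>i. e * v i)"
  shows "e = of_real (Re e)"
proof -
  have "ip I v v \<noteq> 0"
  proof
    assume "ip I v v = 0"
    hence "v i = 0" for i using ip_self_zero[OF fin] v(1) unfolding vecs_on_def by (cases "i \<in> I") auto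
    thus False using v(2) by auto
  qed
  moreover have "cnj e * ip I v v = e * ip I v v"
  proof -
    have "ip I (apply_op I A v) v = ip I v (apply_op I A v)" by (rule herm_adj[OF herm])
    thus ?thesis unfolding ev ip_def by (simp add: sum_distrib_left mult.assoc mult.left_commute)
  qed
  ultimately have "cnj e = e" by simp
  hence "Im e = 0" by (simp add: complex_eq_iff)
  thus ?thesis by (simp add: complex_eq_iff)
qed

lemma apply_op_rank1:
  assumes "u0 \<in> vecs_on I"
  shows "apply_op I (\<lambda>i j. A i j - c * u0 i * cnj (u0 j)) x
       = (\<lambda>i. apply_op I A x i - c * u0 i * ip I u0 x)"
proof
  fix i show "apply_op I (\<lambda>i j. A i j - c * u0 i * cnj (u0 j)) x i = apply_op I A x i - c * u0 i * ip I u0 x"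
    using assms unfolding apply_op_def ip_def vecs_on_def
    by (auto simp: sum_subtractf sum_distrib_left algebra_simps)
qed


lemma ip_scale_right: "ip I x (\<lambda>i. c * y i) = c * ip I x y"
  unfolding ip_def by (simp add: sum_distrib_left mult.left_commute)

lemma ip_scale_left: "ip I (\<lambda>i. c * x i) y = cnj c * ip I x y"
  unfolding ip_def by (simp add: sum_distrib_left mult.assoc)

lemma ip_zero_right: "ip I x (\<lambda>_. 0) = 0"
  unfolding ip_def by simp

lemma ip_zero_left: "ip I (\<lambda>_. 0) x = 0"
  unfolding ip_def by simp

lemma apply_op_scale: "apply_op I A (\<lambda>j. c * x j) = (\<lambda>i. c * apply_op I A x i)"
  unfolding apply_op_def by (auto simp: sum_distrib_left mult.left_commute)

lemma spectral_ind:
  fixes I :: "'i set"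
  assumes fin: "finite I"
  shows "card I + 1 = p + d \<Longrightarrow> hermitian_on I A \<Longrightarrow> orthon I p ws \<Longrightarrow>
    (\<forall>k<p. apply_op I A (ws k) = (\<lambda>_. 0)) \<Longrightarrow> \<exists>m lam u. spec I A m lam u"
proof (induct d arbitrary: A p ws)
  case 0
  have "p \<le> card I" using ortho_card[OF fin, of p ws] "0.prems"(3) unfolding orthon_def by blast
  thus ?case using "0.prems"(1) by simp
next
  case (Suc d)
  note herm = Suc.prems(2)
  show ?case
  proof (cases "\<forall>x. apply_op I A x = (\<lambda>_. 0)")
    case True thus ?thesis using zero_op_spec[OF fin] by blast
  next
    case False
    then obtain x where "apply_op I A x \<noteq> (\<lambda>_. 0)" by blast
    from herm_nz_eig[OF fin herm this] obtain v e where
      v: "v \<in> vecs_on I" "v \<noteq> (\<lambda>_. 0)" and e0: "e \<noteq> 0" and ev: "apply_op I A v = (\<lambda>i. e * v i)"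
      by blast
    define mu where "mu = Re e"
    have emu: "e = of_real mu" unfolding mu_def by (rule eig_real[OF fin herm v ev])
    have mu0: "mu \<noteq> 0" using e0 emu by auto
    define r where "r = Re (ip I v v)"
    have ipv: "ip I v v = of_real r" unfolding r_def ip_self_real by simp
    have r0: "r \<noteq> 0"
    proof
      assume "r = 0"
      hence "v i = 0" for i using ip_self_zero[OF fin, of v] ipv v(1) unfolding vecs_on_def
        by (cases "i \<in> I") auto
      thus False using v(2) by auto
    qed
    have rpos: "r > 0" using r0 unfolding r_def ip_self_real by (simp add: sum_nonneg order_less_le)
    define nv where "nv = sqrt r"
    have nvpos: "nv > 0" using rpos unfolding nv_def by simp
    have nv2: "nv * nv = r" using rpos unfolding nv_def by simp
    define u0 where "u0 = (\<lambda>i. of_real (inverse nv) * v i)"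
    have u0v: "u0 \<in> vecs_on I" using v(1) unfolding u0_def vecs_on_def by simp
    have u0n: "ip I u0 u0 = 1"
      unfolding u0_def ip_scale_left ip_scale_right ipv using nv2 nvpos r0
      by (simp add: field_simps flip: of_real_mult)
    have Au0: "apply_op I A u0 = (\<lambda>i. of_real mu * u0 i)"
      unfolding u0_def apply_op_scale ev emu by (simp add: mult.left_commute)
    have kerorth: "ip I u0 w = 0" if "apply_op I A w = (\<lambda>_. 0)" for w
    proof -
      have "of_real mu * ip I u0 w = ip I (apply_op I A u0) w"
        unfolding Au0 ip_scale_left by simp
      also have "\<dots> = ip I u0 (apply_op I A w)" by (rule herm_adj[OF herm])
      also have "\<dots> = 0" unfolding that ip_zero_right ..
      finally show ?thesis using mu0 by simp
    qed
    define A' where "A' = (\<lambda>i j. A i j - of_real mu * u0 i * cnj (u0 j))"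
    have A'app: "apply_op I A' y = (\<lambda>i. apply_op I A y i - of_real mu * u0 i * ip I u0 y)" for y
      unfolding A'_def by (rule apply_op_rank1[OF u0v])
    have herm': "hermitian_on I A'"
      unfolding hermitian_on_def
    proof (intro ballI)
      fix i j assume ij: "i \<in> I" "j \<in> I"
      have "cnj (A' j i) = cnj (A j i) - of_real mu * cnj (u0 j) * u0 i" by (simp add: A'_def)
      also have "\<dots> = A i j - of_real mu * u0 i * cnj (u0 j)"
        using herm_entry[OF herm ij(2) ij(1)] by (simp add: algebra_simps)
      finally show "A' i j = cnj (A' j i)" by (simp add: A'_def)
    qed
    have A'u0: "apply_op I A' u0 = (\<lambda>_. 0)"
      unfolding A'app Au0 u0n by simp
    define ws' where "ws' = ws(p := u0)"
    have orth': "orthon I (Suc p) ws'"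
    proof -
      have o: "orthon I p ws" by (rule Suc.prems(3))
      have ker: "\<forall>k<p. apply_op I A (ws k) = (\<lambda>_. 0)" by (rule Suc.prems(4))
      have z1: "ip I u0 (ws k) = 0" if "k < p" for k using kerorth ker that by blast
      have z2: "ip I (ws k) u0 = 0" if "k < p" for k using z1[OF that] ip_cnj[of I "ws k" u0] by simp
      show ?thesis using o u0v u0n z1 z2 unfolding orthon_def ws'_def
        by (auto simp: less_Suc_eq)
    qed
    have ker': "\<forall>k<Suc p. apply_op I A' (ws' k) = (\<lambda>_. 0)"
    proof (intro allI impI)
      fix k assume k: "k < Suc p"
      show "apply_op I A' (ws' k) = (\<lambda>_. 0)"
      proof (cases "k = p")
        case True thus ?thesis using A'u0 unfolding ws'_def by simp
      next
        case False
        hence kp: "k < p" using k by simp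
        have "apply_op I A (ws k) = (\<lambda>_. 0)" using Suc.prems(4) kp by blast
        moreover have "ip I u0 (ws k) = 0" using kerorth calculation by blast
        ultimately show ?thesis unfolding ws'_def A'app using False by simp
      qed
    qed
    have "card I + 1 = Suc p + d" using Suc.prems(1) by simp
    from Suc.hyps[OF this herm' orth' ker'] obtain m lam u where sp: "spec I A' m lam u" by blast
    have om: "orthon I m u" and eig': "\<And>k. k < m \<Longrightarrow> lam k \<noteq> 0 \<and> apply_op I A' (u k) = (\<lambda>i. of_real (lam k) * u k i)"
      and dec': "\<And>i j. i \<in> I \<Longrightarrow> j \<in> I \<Longrightarrow> A' i j = (\<Sum>k<m. of_real (lam k) * u k i * cnj (u k j))"
      using sp unfolding spec_def by auto
    have ortu: "ip I u0 (u k) = 0" if k: "k < m" for k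
    proof -
      have "of_real (lam k) * ip I u0 (u k) = ip I u0 (apply_op I A' (u k))"
        using eig'[OF k] by (simp add: ip_scale_right)
      also have "\<dots> = ip I (apply_op I A' u0) (u k)" by (rule herm_adj[OF herm', symmetric])
      also have "\<dots> = 0" unfolding A'u0 ip_zero_left ..
      finally show ?thesis using eig'[OF k] by simp
    qed
    define lam2 where "lam2 = lam(m := mu)"
    define u2 where "u2 = u(m := u0)"
    have "spec I A (Suc m) lam2 u2"
      unfolding spec_def
    proof (intro conjI)
      show "orthon I (Suc m) u2"
      proof -
        have z2: "ip I (u k) u0 = 0" if "k < m" for k using ortu[OF that] ip_cnj[of I "u k" u0] by simp
        show ?thesis using om u0v u0n ortu z2 unfolding orthon_def u2_def
          by (auto simp: less_Suc_eq)
      qed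
      show "\<forall>k<Suc m. lam2 k \<noteq> 0 \<and> apply_op I A (u2 k) = (\<lambda>i. complex_of_real (lam2 k) * u2 k i)"
      proof (intro allI impI)
        fix k assume k: "k < Suc m"
        show "lam2 k \<noteq> 0 \<and> apply_op I A (u2 k) = (\<lambda>i. complex_of_real (lam2 k) * u2 k i)"
        proof (cases "k = m")
          case True thus ?thesis using mu0 Au0 unfolding lam2_def u2_def by simp
        next
          case False
          hence km: "k < m" using k by simp
          have "apply_op I A' (u k) = (\<lambda>i. apply_op I A (u k) i - 0)"
            unfolding A'app ortu[OF km] by simp
          thus ?thesis using eig'[OF km] False unfolding lam2_def u2_def by simp
        qed
      qed
      show "\<forall>i\<in>I. \<forall>j\<in>I. A i j = (\<Sum>k<Suc m. complex_of_real (lam2 k) * u2 k i * cnj (u2 k j))"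
      proof (intro ballI)
        fix i j assume ij: "i \<in> I" "j \<in> I"
        have "(\<Sum>k<m. complex_of_real (lam2 k) * u2 k i * cnj (u2 k j))
            = (\<Sum>k<m. complex_of_real (lam k) * u k i * cnj (u k j))"
          unfolding lam2_def u2_def by (intro sum.cong) auto
        thus "A i j = (\<Sum>k<Suc m. complex_of_real (lam2 k) * u2 k i * cnj (u2 k j))"
        proof -
          have "A i j = (\<Sum>k<m. complex_of_real (lam k) * u k i * cnj (u k j)) + of_real mu * u0 i * cnj (u0 j)"
            using dec'[OF ij] unfolding A'_def by (metis diff_add_cancel)
          thus ?thesis using \<open>(\<Sum>k<m. complex_of_real (lam2 k) * u2 k i * cnj (u2 k j))
            = (\<Sum>k<m. complex_of_real (lam k) * u k i * cnj (u k j))\<close>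
            unfolding lam2_def u2_def by simp
        qed
      qed
    qed
    thus ?thesis by blast
  qed
qed

lemma spectral:
  assumes "finite I" "hermitian_on I A"
  shows "\<exists>m lam u. spec I A m lam u"
  using spectral_ind[OF assms(1), of 0 "card I + 1" A "\<lambda>_ _. 0"] assms(2)
  unfolding orthon_def by simp



lemma spec_trace:
  assumes sp: "spec I S m lam u"
  shows "tr I (opmul I S R) = (\<Sum>k<m. of_real (lam k) * ip I (u k) (apply_op I R (u k)))"
proof -
  have dec: "\<And>i j. i \<in> I \<Longrightarrow> j \<in> I \<Longrightarrow> S i j = (\<Sum>k<m. of_real (lam k) * u k i * cnj (u k j))"
    using sp unfolding spec_def by auto
  have "tr I (opmul I S R) = (\<Sum>i\<in>I. \<Sum>j\<in>I. \<Sum>k<m. of_real (lam k) * u k i * cnj (u k j) * R j i)"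
    unfolding tr_def opmul_def using dec by (simp add: sum_distrib_right)
  also have "\<dots> = (\<Sum>i\<in>I. \<Sum>k<m. \<Sum>j\<in>I. of_real (lam k) * u k i * cnj (u k j) * R j i)"
    by (rule sum.cong[OF refl], rule sum.swap)
  also have "\<dots> = (\<Sum>k<m. \<Sum>i\<in>I. \<Sum>j\<in>I. of_real (lam k) * u k i * cnj (u k j) * R j i)"
    by (rule sum.swap)
  also have "\<dots> = (\<Sum>k<m. \<Sum>j\<in>I. \<Sum>i\<in>I. of_real (lam k) * u k i * cnj (u k j) * R j i)"
    by (rule sum.cong[OF refl], rule sum.swap)
  also have "\<dots> = (\<Sum>k<m. of_real (lam k) * ip I (u k) (apply_op I R (u k)))"
    unfolding ip_def apply_op_def
    by (intro sum.cong refl) (simp add: sum_distrib_left algebra_simps)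
  finally show ?thesis .
qed

lemma spec_apply:
  assumes sp: "spec I S m lam u" and i: "i \<in> I"
  shows "apply_op I S x i = (\<Sum>k<m. of_real (lam k) * u k i * ip I (u k) x)"
proof -
  have dec: "\<And>j. j \<in> I \<Longrightarrow> S i j = (\<Sum>k<m. of_real (lam k) * u k i * cnj (u k j))"
    using sp i unfolding spec_def by auto
  have "apply_op I S x i = (\<Sum>j\<in>I. \<Sum>k<m. of_real (lam k) * u k i * cnj (u k j) * x j)"
    unfolding apply_op_def using i dec by (simp add: sum_distrib_right)
  also have "\<dots> = (\<Sum>k<m. \<Sum>j\<in>I. of_real (lam k) * u k i * cnj (u k j) * x j)"
    by (rule sum.swap)
  also have "\<dots> = (\<Sum>k<m. of_real (lam k) * u k i * ip I (u k) x)"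
    unfolding ip_def by (intro sum.cong refl) (simp add: sum_distrib_left algebra_simps)
  finally show ?thesis .
qed

lemma spec_nz:
  assumes sp: "spec I S m lam u" and k: "k < m"
  shows "u k \<in> nz_eigvecs I S"
proof -
  have o: "u k \<in> vecs_on I" "ip I (u k) (u k) = 1" and e: "lam k \<noteq> 0"
    "apply_op I S (u k) = (\<lambda>i. of_real (lam k) * u k i)"
    using sp k unfolding spec_def orthon_def by auto
  have "u k \<noteq> (\<lambda>_. 0)" using o(2) unfolding ip_def by auto
  thus ?thesis using o e unfolding nz_eigvecs_def by auto
qed

lemma kill_cspan:
  assumes "\<And>v. v \<in> E \<Longrightarrow> apply_op I R v = (\<lambda>_. 0)" "w \<in> cspan E"
  shows "apply_op I R w = (\<lambda>_. 0)"
proof -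
  obtain S c where S: "finite S" "S \<subseteq> E" "w = (\<lambda>i. \<Sum>u\<in>S. c u * u i)"
    using assms(2) unfolding cspan_def by blast
  have "apply_op I R w = (\<lambda>i. \<Sum>u\<in>S. c u * apply_op I R u i)"
    unfolding S(3) using apply_op_sum[of I R c "\<lambda>u. u" S] by simp
  also have "\<dots> = (\<lambda>_. 0)" using assms(1) S(2) by (intro ext sum.neutral) auto
  finally show ?thesis .
qed

lemma in_cspan: "v \<in> E \<Longrightarrow> v \<in> cspan E"
  unfolding cspan_def by (rule CollectI, rule exI[of _ "{v}"], rule exI[of _ "\<lambda>_. 1"]) auto

lemma trace_kill_A:
  assumes fin: "finite I" and psdS: "psd_on I S" and sp: "spec I S m lam u"
    and psdR: "psd_on I R" and tr0: "tr I (opmul I S R) = 0"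
  shows "\<And>v. v \<in> nz_eigvecs I S \<Longrightarrow> apply_op I R v = (\<lambda>_. 0)"
proof -
  have o: "\<And>k. k < m \<Longrightarrow> u k \<in> vecs_on I \<and> ip I (u k) (u k) = 1"
    and e: "\<And>k. k < m \<Longrightarrow> lam k \<noteq> 0 \<and> apply_op I S (u k) = (\<lambda>i. of_real (lam k) * u k i)"
    using sp unfolding spec_def orthon_def by auto
  have lpos: "lam k > 0" if k: "k < m" for k
  proof -
    have "ip I (u k) (apply_op I S (u k)) = of_real (lam k)"
      using e[OF k] o[OF k] by (simp add: ip_scale_right)
    thus ?thesis using psd_quad[OF psdS, of "u k"] e[OF k] by simp
  qed
  define q where "q k = ip I (u k) (apply_op I R (u k))" for k
  have qI: "Im (q k) = 0" and qR: "Re (q k) \<ge> 0" for k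
    using psd_quad[OF psdR, of "u k"] unfolding q_def by auto
  have "(\<Sum>k<m. lam k * Re (q k)) = Re (\<Sum>k<m. of_real (lam k) * q k)"
    by (simp add: Re_sum)
  also have "\<dots> = 0" using tr0 spec_trace[OF sp, of R] unfolding q_def by simp
  finally have "(\<Sum>k<m. lam k * Re (q k)) = 0" .
  hence z: "lam k * Re (q k) = 0" if "k < m" for k
    using sum_nonneg_eq_0_iff[of "{..<m}" "\<lambda>k. lam k * Re (q k)"] lpos qR that
    by (simp add: less_imp_le)
  have Ru: "apply_op I R (u k) = (\<lambda>_. 0)" if k: "k < m" for k
  proof -
    have "Re (q k) = 0" using z[OF k] lpos[OF k] by simp
    hence "q k = 0" using qI[of k] by (simp add: complex_eq_iff)
    thus ?thesis unfolding q_def by (rule psd_kill[OF fin psdR])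
  qed
  fix v assume v: "v \<in> nz_eigvecs I S"
  then obtain e where v1: "v \<in> vecs_on I" "e \<noteq> 0" "apply_op I S v = (\<lambda>i. e * v i)"
    unfolding nz_eigvecs_def by blast
  have vv: "v = (\<lambda>i. \<Sum>k<m. (of_real (lam k) * ip I (u k) v / e) * u k i)"
  proof
    fix i show "v i = (\<Sum>k<m. (of_real (lam k) * ip I (u k) v / e) * u k i)"
    proof (cases "i \<in> I")
      case True
      have "e * v i = (\<Sum>k<m. of_real (lam k) * u k i * ip I (u k) v)"
        using spec_apply[OF sp True, of v] v1(3) by metis
      hence "v i = (\<Sum>k<m. of_real (lam k) * u k i * ip I (u k) v) / e" using v1(2)
        by (simp add: field_simps)
      thus ?thesis by (simp add: sum_divide_distrib algebra_simps)
    next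
      case False
      have "u k i = 0" if "k < m" for k using o[OF that] False unfolding vecs_on_def by auto
      thus ?thesis using v1(1) False unfolding vecs_on_def by simp
    qed
  qed
  have "apply_op I R v = (\<lambda>i. \<Sum>k<m. (of_real (lam k) * ip I (u k) v / e) * apply_op I R (u k) i)"
    by (subst vv, rule apply_op_sum)
  also have "\<dots> = (\<lambda>_. 0)" using Ru by simp
  finally show "apply_op I R v = (\<lambda>_. 0)" .
qed

lemma trace_kill_B:
  assumes sp: "spec I S m lam u"
    and kill: "\<And>v. v \<in> nz_eigvecs I S \<Longrightarrow> apply_op I R v = (\<lambda>_. 0)"
  shows "tr I (opmul I S R) = 0"
  unfolding spec_trace[OF sp] using kill[OF spec_nz[OF sp]] by (simp add: ip_zero_right)



lemma tr_real:
  assumes fin: "finite I" and hs: "hermitian_on I S" and hp: "hermitian_on I P"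
  shows "cnj (tr I (opmul I S P)) = tr I (opmul I S P)"
proof -
  have "cnj (tr I (opmul I S P)) = (\<Sum>i\<in>I. \<Sum>k\<in>I. cnj (S i k) * cnj (P k i))"
    unfolding tr_def opmul_def by (simp add: cnj_sum)
  also have "\<dots> = (\<Sum>i\<in>I. \<Sum>k\<in>I. S k i * P i k)"
    using herm_entry[OF hs] herm_entry[OF hp] by (intro sum.cong refl) simp
  also have "\<dots> = (\<Sum>k\<in>I. \<Sum>i\<in>I. S k i * P i k)" by (rule sum.swap)
  also have "\<dots> = tr I (opmul I S P)" unfolding tr_def opmul_def ..
  finally show ?thesis .
qed

lemma tr_R:
  assumes fin: "finite I"
  shows "tr I (opmul I X (\<lambda>i j. idop i j - P i j / c)) = tr I X - tr I (opmul I X P) / c"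
proof -
  have "opmul I X (\<lambda>i j. idop i j - P i j / c) i i = X i i - opmul I X P i i / c" if i: "i \<in> I" for i
  proof -
    have "opmul I X (\<lambda>i j. idop i j - P i j / c) i i = (\<Sum>k\<in>I. X i k * idop k i) - (\<Sum>k\<in>I. X i k * P k i) / c"
      unfolding opmul_def by (simp add: algebra_simps sum_subtractf sum_divide_distrib)
    also have "(\<Sum>k\<in>I. X i k * idop k i) = X i i"
      unfolding idop_def using sum_delta_mult[OF fin i, of "X i"] by simp
    finally show ?thesis unfolding opmul_def .
  qed
  hence "tr I (opmul I X (\<lambda>i j. idop i j - P i j / c)) = (\<Sum>i\<in>I. X i i - opmul I X P i i / c)"
    unfolding tr_def by (intro sum.cong refl) simp
  also have "\<dots> = tr I X - tr I (opmul I X P) / c"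
    unfolding tr_def by (simp add: sum_subtractf sum_divide_distrib)
  finally show ?thesis .
qed

lemma key:
  assumes fin: "finite I" and d1: "density_on I s" and d2: "density_on I s2"
    and supp: "support I s2 = support I s"
    and Pp: "psd_on I P" and tpos: "Re (tr I (opmul I s P)) > 0"
    and Rp: "psd_on I (\<lambda>i j. idop i j - P i j / of_real (Re (tr I (opmul I s P))))"
  shows "Re (tr I (opmul I s2 P)) = Re (tr I (opmul I s P))"
proof -
  define t where "t = Re (tr I (opmul I s P))"
  define R where "R = (\<lambda>i j. idop i j - P i j / of_real t)"
  have ps1: "psd_on I s" and tr1: "tr I s = 1" using d1 unfolding density_on_def by auto
  have ps2: "psd_on I s2" and tr2: "tr I s2 = 1" using d2 unfolding density_on_def by auto
  have hs1: "hermitian_on I s" using ps1 unfolding psd_on_def by simp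
  have hs2: "hermitian_on I s2" using ps2 unfolding psd_on_def by simp
  have hP: "hermitian_on I P" using Pp unfolding psd_on_def by simp
  have treal: "tr I (opmul I s P) = of_real t"
  proof -
    have "cnj (tr I (opmul I s P)) = tr I (opmul I s P)" by (rule tr_real[OF fin hs1 hP])
    hence "Im (tr I (opmul I s P)) = 0" by (simp add: complex_eq_iff)
    thus ?thesis unfolding t_def by (simp add: complex_eq_iff)
  qed
  have t0: "t \<noteq> 0" using tpos unfolding t_def by simp
  have RpR: "psd_on I R" using Rp unfolding R_def t_def .
  have trR1: "tr I (opmul I s R) = 0"
    unfolding R_def tr_R[OF fin] treal tr1 using t0 by simp
  obtain m1 lam1 u1 where sp1: "spec I s m1 lam1 u1" using spectral[OF fin hs1] by blast
  obtain m2 lam2 u2 where sp2: "spec I s2 m2 lam2 u2" using spectral[OF fin hs2] by blast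
  have k1: "\<And>v. v \<in> nz_eigvecs I s \<Longrightarrow> apply_op I R v = (\<lambda>_. 0)"
    by (rule trace_kill_A[OF fin ps1 sp1 RpR trR1])
  have k2: "apply_op I R v = (\<lambda>_. 0)" if v: "v \<in> nz_eigvecs I s2" for v
  proof -
    have "v \<in> support I s" using in_cspan[OF v] supp unfolding support_def by simp
    thus ?thesis using kill_cspan[OF k1] unfolding support_def by blast
  qed
  have "tr I (opmul I s2 R) = 0" by (rule trace_kill_B[OF sp2 k2])
  hence "tr I s2 - tr I (opmul I s2 P) / of_real t = 0" unfolding R_def tr_R[OF fin] .
  hence "tr I (opmul I s2 P) = of_real t" using t0 tr2 by (simp add: field_simps)
  thus ?thesis unfolding t_def by simp
qed

lemma fin_tidx: "finite (tidx dims)"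
proof -
  have "tidx dims \<subseteq> {xs. set xs \<subseteq> {..<sum_list dims} \<and> length xs = length dims}"
  proof
    fix xs assume xs: "xs \<in> tidx dims"
    have "x < sum_list dims" if x: "x \<in> set xs" for x
    proof -
      obtain k where k: "k < length xs" "xs ! k = x" using x by (auto simp: in_set_conv_nth)
      have "xs ! k < dims ! k" using xs k unfolding tidx_def by auto
      also have "dims ! k \<le> sum_list dims" using xs k unfolding tidx_def by (auto intro: elem_le_sum_list)
      finally show ?thesis using k by simp
    qed
    thus "xs \<in> {xs. set xs \<subseteq> {..<sum_list dims} \<and> length xs = length dims}"
      using xs unfolding tidx_def by auto
  qed
  moreover have "finite {xs. set xs \<subseteq> {..<sum_list dims} \<and> length xs = length dims}"
    by (rule finite_lists_length_eq) simp
  ultimately show ?thesis by (rule finite_subset)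
qed

definition feas :: "nat list \<Rightarrow> nat list op \<Rightarrow> nat list op \<Rightarrow> bool" where
  "feas dims \<sigma> P \<longleftrightarrow> separable dims P \<and> psd_on (tidx dims) P \<and>
       Re (tr (tidx dims) (opmul (tidx dims) \<sigma> P)) > 0 \<and>
       (let t = Re (tr (tidx dims) (opmul (tidx dims) \<sigma> P)) in
          psd_on (tidx dims) (\<lambda>i j. P i j / of_real t) \<and>
          psd_on (tidx dims) (\<lambda>i j. idop i j - P i j / of_real t))"

lemma dval_alt: "dval dims \<sigma> = Inf {Re (tr (tidx dims) P) / Re (tr (tidx dims) (opmul (tidx dims) \<sigma> P)) | P. feas dims \<sigma> P}"
  unfolding dval_def feas_def ..

lemma feas_transfer:
  assumes d1: "density_on (tidx dims) s" and d2: "density_on (tidx dims) s2"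
    and supp: "support (tidx dims) s2 = support (tidx dims) s"
    and f: "feas dims s P"
  shows "feas dims s2 P \<and> Re (tr (tidx dims) (opmul (tidx dims) s2 P)) = Re (tr (tidx dims) (opmul (tidx dims) s P))"
proof -
  have e: "Re (tr (tidx dims) (opmul (tidx dims) s2 P)) = Re (tr (tidx dims) (opmul (tidx dims) s P))"
    using f unfolding feas_def Let_def
    by (intro key[OF fin_tidx d1 d2 supp]) auto
  show ?thesis using f e unfolding feas_def Let_def by simp
qed

theorem mainTheorem8:
  fixes dims :: "nat list" and \<sigma> \<sigma>'' :: "nat list op"
  assumes "density_on (tidx dims) \<sigma>"
    and "density_on (tidx dims) \<sigma>''"
    and "support (tidx dims) \<sigma>'' = support (tidx dims) \<sigma>"
  shows "dval dims \<sigma>'' = dval dims \<sigma>"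
proof -
  have f1: "feas dims \<sigma>'' P \<and> Re (tr (tidx dims) (opmul (tidx dims) \<sigma>'' P)) = Re (tr (tidx dims) (opmul (tidx dims) \<sigma> P))"
    if "feas dims \<sigma> P" for P by (rule feas_transfer[OF assms that])
  have f2: "feas dims \<sigma> P \<and> Re (tr (tidx dims) (opmul (tidx dims) \<sigma> P)) = Re (tr (tidx dims) (opmul (tidx dims) \<sigma>'' P))"
    if "feas dims \<sigma>'' P" for P by (rule feas_transfer[OF assms(2,1) assms(3)[symmetric] that])
  have "{Re (tr (tidx dims) P) / Re (tr (tidx dims) (opmul (tidx dims) \<sigma>'' P)) | P. feas dims \<sigma>'' P}
      = {Re (tr (tidx dims) P) / Re (tr (tidx dims) (opmul (tidx dims) \<sigma> P)) | P. feas dims \<sigma> P}"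
  proof (rule equalityI; rule subsetI)
    fix x assume "x \<in> {Re (tr (tidx dims) P) / Re (tr (tidx dims) (opmul (tidx dims) \<sigma>'' P)) | P. feas dims \<sigma>'' P}"
    then obtain P where x: "x = Re (tr (tidx dims) P) / Re (tr (tidx dims) (opmul (tidx dims) \<sigma>'' P))" and fP: "feas dims \<sigma>'' P" by blast
    have g: "feas dims \<sigma> P" "Re (tr (tidx dims) (opmul (tidx dims) \<sigma> P)) = Re (tr (tidx dims) (opmul (tidx dims) \<sigma>'' P))"
      using f2[OF fP] by auto
    show "x \<in> {Re (tr (tidx dims) P) / Re (tr (tidx dims) (opmul (tidx dims) \<sigma> P)) | P. feas dims \<sigma> P}"
      unfolding x using g by (intro CollectI exI[of _ P]) simp
  next
    fix x assume "x \<in> {Re (tr (tidx dims) P) / Re (tr (tidx dims) (opmul (tidx dims) \<sigma> P)) | P. feas dims \<sigma> P}"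
    then obtain P where x: "x = Re (tr (tidx dims) P) / Re (tr (tidx dims) (opmul (tidx dims) \<sigma> P))" and fP: "feas dims \<sigma> P" by blast
    have g: "feas dims \<sigma>'' P" "Re (tr (tidx dims) (opmul (tidx dims) \<sigma>'' P)) = Re (tr (tidx dims) (opmul (tidx dims) \<sigma> P))"
      using f1[OF fP] by auto
    show "x \<in> {Re (tr (tidx dims) P) / Re (tr (tidx dims) (opmul (tidx dims) \<sigma>'' P)) | P. feas dims \<sigma>'' P}"
      unfolding x using g by (intro CollectI exI[of _ P]) simp
  qed
  thus ?thesis unfolding dval_alt by simp
qed


end
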